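(* Let $B$ be a finite one-generator skew brace and $x\in B$ such that $B=B(x)$. Then the orbit $X$ of $x$ under the subgroup of $\mathrm{Sym}(B)$ generated by $\{\sigma_a,\delta_a: a\in B\}$ is a transitive cycle base of $B$.
   Context: A skew brace is a triple $(B,+,\circ)$ where $(B,+)$ and $(B,\circ)$ are groups and $a\circ(b+c)=a\circ b-a+a\circ c$; $a^-$ is the inverse in $(B,\circ)$. Put $\lambda_a(b):=-a+a\circ b$, $\delta_a(b):=a\circ b-a$, $\sigma_a:=\lambda_{a^-}$ (so the group generated by $\{\sigma_a,\delta_a\}$ equals that generated by $\{\lambda_a,\delta_a\}$). $B(x)$ is the smallest subset containing $x$ that is a subgroup of both $(B,+)$ and $(B,\circ)$; $B$ is one-generator if $B=B(x)$ for some $x$. A transitive cycle base of $B$ is a subset that is a single orbit of the group generated by $\{\lambda_a,\delta_a:a\in B\}$ and generates $(B,+)$. *)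

theory Defs
  imports "HOL-Algebra.Generated_Groups" "HOL-Algebra.Bij"
begin

definition skew_brace :: "('a, 'b) monoid_scheme \<Rightarrow> ('a, 'c) monoid_scheme \<Rightarrow> bool" where
  "skew_brace A M \<longleftrightarrow> group A \<and> group M \<and> carrier A = carrier M \<and>
     (\<forall>a\<in>carrier A. \<forall>b\<in>carrier A. \<forall>c\<in>carrier A.
        a \<otimes>\<^bsub>M\<^esub> (b \<otimes>\<^bsub>A\<^esub> c)
          = (a \<otimes>\<^bsub>M\<^esub> b) \<otimes>\<^bsub>A\<^esub> inv\<^bsub>A\<^esub> a \<otimes>\<^bsub>A\<^esub> (a \<otimes>\<^bsub>M\<^esub> c))"

definition brace_lambda :: "('a, 'b) monoid_scheme \<Rightarrow> ('a, 'c) monoid_scheme \<Rightarrow> 'a \<Rightarrow> 'a \<Rightarrow> 'a" where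
  "brace_lambda A M a = (\<lambda>b\<in>carrier A. inv\<^bsub>A\<^esub> a \<otimes>\<^bsub>A\<^esub> (a \<otimes>\<^bsub>M\<^esub> b))"

definition brace_delta :: "('a, 'b) monoid_scheme \<Rightarrow> ('a, 'c) monoid_scheme \<Rightarrow> 'a \<Rightarrow> 'a \<Rightarrow> 'a" where
  "brace_delta A M a = (\<lambda>b\<in>carrier A. (a \<otimes>\<^bsub>M\<^esub> b) \<otimes>\<^bsub>A\<^esub> inv\<^bsub>A\<^esub> a)"

definition brace_sigma :: "('a, 'b) monoid_scheme \<Rightarrow> ('a, 'c) monoid_scheme \<Rightarrow> 'a \<Rightarrow> 'a \<Rightarrow> 'a" where
  "brace_sigma A M a = brace_lambda A M (inv\<^bsub>M\<^esub> a)"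

definition brace_gen :: "('a, 'b) monoid_scheme \<Rightarrow> ('a, 'c) monoid_scheme \<Rightarrow> 'a \<Rightarrow> 'a set" where
  "brace_gen A M x = \<Inter>{S. x \<in> S \<and> subgroup S A \<and> subgroup S M}"

definition perm_orbit :: "'a set \<Rightarrow> ('a \<Rightarrow> 'a) set \<Rightarrow> 'a \<Rightarrow> 'a set" where
  "perm_orbit S F y = {g y | g. g \<in> generate (BijGroup S) F}"

definition lambda_delta_gens :: "('a, 'b) monoid_scheme \<Rightarrow> ('a, 'c) monoid_scheme \<Rightarrow> ('a \<Rightarrow> 'a) set" where
  "lambda_delta_gens A M = (\<Union>a\<in>carrier A. {brace_lambda A M a, brace_delta A M a})"

definition sigma_delta_gens :: "('a, 'b) monoid_scheme \<Rightarrow> ('a, 'c) monoid_scheme \<Rightarrow> ('a \<Rightarrow> 'a) set" where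
  "sigma_delta_gens A M = (\<Union>a\<in>carrier A. {brace_sigma A M a, brace_delta A M a})"

definition transitive_cycle_base :: "('a, 'b) monoid_scheme \<Rightarrow> ('a, 'c) monoid_scheme \<Rightarrow> 'a set \<Rightarrow> bool" where
  "transitive_cycle_base A M X \<longleftrightarrow> X \<subseteq> carrier A \<and>
     (\<exists>y\<in>carrier A. X = perm_orbit (carrier A) (lambda_delta_gens A M) y) \<and>
     generate A X = carrier A"

end

theory Submission
  imports Defs
begin

locale sbr = A: group A + M: group M
  for A :: "('a, 'b) monoid_scheme" and M :: "('a, 'c) monoid_scheme" +
  assumes carr: "carrier M = carrier A"
    and brace: "\<And>a b c. a \<in> carrier A \<Longrightarrow> b \<in> carrier A \<Longrightarrow> c \<in> carrier A \<Longrightarrow>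
        a \<otimes>\<^bsub>M\<^esub> (b \<otimes>\<^bsub>A\<^esub> c)
          = (a \<otimes>\<^bsub>M\<^esub> b) \<otimes>\<^bsub>A\<^esub> inv\<^bsub>A\<^esub> a \<otimes>\<^bsub>A\<^esub> (a \<otimes>\<^bsub>M\<^esub> c)"
begin

lemma mc: "a \<in> carrier A \<Longrightarrow> b \<in> carrier A \<Longrightarrow> a \<otimes>\<^bsub>M\<^esub> b \<in> carrier A"
  using M.m_closed carr by auto

lemma mic: "a \<in> carrier A \<Longrightarrow> inv\<^bsub>M\<^esub> a \<in> carrier A"
  using M.inv_closed carr by auto

lemma r_one0: assumes a: "a \<in> carrier A" shows "a \<otimes>\<^bsub>M\<^esub> \<one>\<^bsub>A\<^esub> = a"
proof -
  define y where "y = a \<otimes>\<^bsub>M\<^esub> \<one>\<^bsub>A\<^esub>"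
  have y: "y \<in> carrier A" using a mc y_def by auto
  have "y = y \<otimes>\<^bsub>A\<^esub> inv\<^bsub>A\<^esub> a \<otimes>\<^bsub>A\<^esub> y"
    using brace[OF a A.one_closed A.one_closed] y_def by simp
  hence "\<one>\<^bsub>A\<^esub> \<otimes>\<^bsub>A\<^esub> y = (y \<otimes>\<^bsub>A\<^esub> inv\<^bsub>A\<^esub> a) \<otimes>\<^bsub>A\<^esub> y" using y by simp
  hence "\<one>\<^bsub>A\<^esub> = y \<otimes>\<^bsub>A\<^esub> inv\<^bsub>A\<^esub> a"
    using A.right_cancel y a by (metis A.inv_closed A.m_closed A.one_closed)
  thus ?thesis unfolding y_def[symmetric]
    by (metis A.inv_closed A.inv_inv A.inv_equality a y)
qed

lemma one_eq: "\<one>\<^bsub>M\<^esub> = \<one>\<^bsub>A\<^esub>"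
proof -
  have "\<one>\<^bsub>M\<^esub> \<in> carrier A" using carr by auto
  hence "\<one>\<^bsub>M\<^esub> \<otimes>\<^bsub>M\<^esub> \<one>\<^bsub>A\<^esub> = \<one>\<^bsub>M\<^esub>" using r_one0 by blast
  moreover have "\<one>\<^bsub>M\<^esub> \<otimes>\<^bsub>M\<^esub> \<one>\<^bsub>A\<^esub> = \<one>\<^bsub>A\<^esub>" using carr by auto
  ultimately show ?thesis by simp
qed

lemma lam_app: "b \<in> carrier A \<Longrightarrow> brace_lambda A M a b = inv\<^bsub>A\<^esub> a \<otimes>\<^bsub>A\<^esub> (a \<otimes>\<^bsub>M\<^esub> b)"
  by (simp add: brace_lambda_def)

lemma lam_closed: "a \<in> carrier A \<Longrightarrow> b \<in> carrier A \<Longrightarrow> brace_lambda A M a b \<in> carrier A"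
  by (simp add: lam_app mc)

lemma lam_hom: assumes "a \<in> carrier A" "b \<in> carrier A" "c \<in> carrier A"
  shows "brace_lambda A M a (b \<otimes>\<^bsub>A\<^esub> c) = brace_lambda A M a b \<otimes>\<^bsub>A\<^esub> brace_lambda A M a c"
  using assms by (simp add: lam_app brace mc A.m_assoc)

lemma lam_one: "a \<in> carrier A \<Longrightarrow> brace_lambda A M a \<one>\<^bsub>A\<^esub> = \<one>\<^bsub>A\<^esub>"
  by (simp add: lam_app r_one0)

lemma lam_inv: assumes "a \<in> carrier A" "b \<in> carrier A"
  shows "brace_lambda A M a (inv\<^bsub>A\<^esub> b) = inv\<^bsub>A\<^esub> (brace_lambda A M a b)"
proof -
  have "brace_lambda A M a b \<otimes>\<^bsub>A\<^esub> brace_lambda A M a (inv\<^bsub>A\<^esub> b) = \<one>\<^bsub>A\<^esub>"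
    using assms lam_hom[of a b "inv\<^bsub>A\<^esub> b"] lam_one by simp
  thus ?thesis using assms lam_closed
    by (metis A.inv_closed A.inv_equality A.inv_inv A.m_closed A.r_inv)
qed

lemma lam_Bij: assumes a: "a \<in> carrier A" shows "brace_lambda A M a \<in> Bij (carrier A)"
proof -
  have "inj_on (brace_lambda A M a) (carrier A)"
  proof (rule inj_onI)
    fix b c assume b: "b \<in> carrier A" and c: "c \<in> carrier A" and e: "brace_lambda A M a b = brace_lambda A M a c"
    hence "a \<otimes>\<^bsub>M\<^esub> b = a \<otimes>\<^bsub>M\<^esub> c" using a by (simp add: lam_app mc)
    thus "b = c" using a b c carr by (metis M.Units_eq M.Units_l_cancel)
  qed
  moreover have "brace_lambda A M a ` carrier A = carrier A"
  proof
    show "brace_lambda A M a ` carrier A \<subseteq> carrier A" using a lam_closed by auto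
    show "carrier A \<subseteq> brace_lambda A M a ` carrier A"
    proof
      fix c assume c: "c \<in> carrier A"
      define b where "b = inv\<^bsub>M\<^esub> a \<otimes>\<^bsub>M\<^esub> (a \<otimes>\<^bsub>A\<^esub> c)"
      have b: "b \<in> carrier A" using a c b_def mc mic by auto
      have "a \<otimes>\<^bsub>M\<^esub> b = a \<otimes>\<^bsub>A\<^esub> c" unfolding b_def using a c carr
        by (metis A.m_closed M.inv_closed M.m_assoc M.one_closed M.r_inv M.l_one)
      hence "brace_lambda A M a b = c" using a b c by (simp add: lam_app A.m_assoc[symmetric])
      thus "c \<in> brace_lambda A M a ` carrier A" using b by blast
    qed
  qed
  ultimately show ?thesis by (simp add: Bij_def bij_betw_def brace_lambda_def)
qed

lemma del_Bij: assumes a: "a \<in> carrier A" shows "brace_delta A M a \<in> Bij (carrier A)"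
proof -
  have "inj_on (brace_delta A M a) (carrier A)"
  proof (rule inj_onI)
    fix b c assume b: "b \<in> carrier A" and c: "c \<in> carrier A" and e: "brace_delta A M a b = brace_delta A M a c"
    hence "a \<otimes>\<^bsub>M\<^esub> b = a \<otimes>\<^bsub>M\<^esub> c" using a by (simp add: brace_delta_def mc)
    thus "b = c" using a b c carr by (metis M.Units_eq M.Units_l_cancel)
  qed
  moreover have "brace_delta A M a ` carrier A = carrier A"
  proof
    show "brace_delta A M a ` carrier A \<subseteq> carrier A" using a by (auto simp: brace_delta_def mc)
    show "carrier A \<subseteq> brace_delta A M a ` carrier A"
    proof
      fix c assume c: "c \<in> carrier A"
      define b where "b = inv\<^bsub>M\<^esub> a \<otimes>\<^bsub>M\<^esub> (c \<otimes>\<^bsub>A\<^esub> a)"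
      have b: "b \<in> carrier A" using a c b_def mc mic by auto
      have "a \<otimes>\<^bsub>M\<^esub> b = c \<otimes>\<^bsub>A\<^esub> a" unfolding b_def using a c carr
        by (metis A.m_closed M.inv_closed M.m_assoc M.one_closed M.r_inv M.l_one)
      hence "brace_delta A M a b = c" using a b c by (simp add: brace_delta_def A.m_assoc)
      thus "c \<in> brace_delta A M a ` carrier A" using b by blast
    qed
  qed
  ultimately show ?thesis by (simp add: Bij_def bij_betw_def brace_delta_def)
qed

lemma gens_eq: "sigma_delta_gens A M = lambda_delta_gens A M"
proof -
  have "brace_sigma A M a = brace_lambda A M (inv\<^bsub>M\<^esub> a)" for a by (simp add: brace_sigma_def)
  show ?thesis unfolding sigma_delta_gens_def lambda_delta_gens_def brace_sigma_def
  proof (intro equalityI subsetI)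
    fix f assume "f \<in> (\<Union>a\<in>carrier A. {brace_lambda A M (inv\<^bsub>M\<^esub> a), brace_delta A M a})"
    then obtain a where a: "a \<in> carrier A" and "f = brace_lambda A M (inv\<^bsub>M\<^esub> a) \<or> f = brace_delta A M a" by blast
    thus "f \<in> (\<Union>a\<in>carrier A. {brace_lambda A M a, brace_delta A M a})" using mic by blast
  next
    fix f assume "f \<in> (\<Union>a\<in>carrier A. {brace_lambda A M a, brace_delta A M a})"
    then obtain a where a: "a \<in> carrier A" and "f = brace_lambda A M a \<or> f = brace_delta A M a" by blast
    moreover have "inv\<^bsub>M\<^esub> (inv\<^bsub>M\<^esub> a) = a" using a carr by simp
    ultimately show "f \<in> (\<Union>a\<in>carrier A. {brace_lambda A M (inv\<^bsub>M\<^esub> a), brace_delta A M a})"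
      using mic by (metis (no_types, lifting) UN_iff insertCI)
  qed
qed

lemma gens_Bij: "lambda_delta_gens A M \<subseteq> Bij (carrier A)"
  unfolding lambda_delta_gens_def using lam_Bij del_Bij by auto


lemma gen_Bij: "generate (BijGroup (carrier A)) (lambda_delta_gens A M) \<subseteq> Bij (carrier A)"
proof -
  have c: "carrier (BijGroup (carrier A)) = Bij (carrier A)" by (simp add: BijGroup_def)
  show ?thesis using group.generate_in_carrier[OF group_BijGroup, of "lambda_delta_gens A M" "carrier A"] gens_Bij
    unfolding c by blast
qed

lemma orbit_sub: assumes x: "x \<in> carrier A"
  shows "perm_orbit (carrier A) (lambda_delta_gens A M) x \<subseteq> carrier A"
  using gen_Bij x by (auto simp: perm_orbit_def dest!: Bij_imp_funcset)

lemma x_in_orbit: assumes x: "x \<in> carrier A"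
  shows "x \<in> perm_orbit (carrier A) (lambda_delta_gens A M) x"
proof -
  have "\<one>\<^bsub>BijGroup (carrier A)\<^esub> \<in> generate (BijGroup (carrier A)) (lambda_delta_gens A M)"
    by (rule generate.one)
  moreover have "\<one>\<^bsub>BijGroup (carrier A)\<^esub> x = x" using x by (simp add: BijGroup_def)
  ultimately show ?thesis unfolding perm_orbit_def by (metis (mono_tags, lifting) mem_Collect_eq)
qed

lemma orbit_lam: assumes x: "x \<in> carrier A" and b: "b \<in> carrier A"
    and y: "y \<in> perm_orbit (carrier A) (lambda_delta_gens A M) x"
  shows "brace_lambda A M b y \<in> perm_orbit (carrier A) (lambda_delta_gens A M) x"
proof -
  obtain g where g: "g \<in> generate (BijGroup (carrier A)) (lambda_delta_gens A M)" and yg: "y = g x"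
    using y unfolding perm_orbit_def by blast
  have lb: "brace_lambda A M b \<in> generate (BijGroup (carrier A)) (lambda_delta_gens A M)"
    by (rule generate.incl) (use b in \<open>auto simp: lambda_delta_gens_def\<close>)
  have "brace_lambda A M b \<otimes>\<^bsub>BijGroup (carrier A)\<^esub> g \<in> generate (BijGroup (carrier A)) (lambda_delta_gens A M)"
    by (rule generate.eng[OF lb g])
  moreover have "(brace_lambda A M b \<otimes>\<^bsub>BijGroup (carrier A)\<^esub> g) x = brace_lambda A M b y"
  proof -
    have gB: "g \<in> Bij (carrier A)" using gen_Bij g by blast
    show ?thesis using gB lam_Bij[OF b] x yg by (simp add: BijGroup_def compose_def)
  qed
  ultimately show ?thesis unfolding perm_orbit_def by (metis (mono_tags, lifting) mem_Collect_eq)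
qed

lemma gen_lam: assumes x: "x \<in> carrier A" and b: "b \<in> carrier A"
    and h: "h \<in> generate A (perm_orbit (carrier A) (lambda_delta_gens A M) x)"
  shows "brace_lambda A M b h \<in> generate A (perm_orbit (carrier A) (lambda_delta_gens A M) x)"
  using h
proof (induction rule: generate.induct)
  case one
  then show ?case using lam_one[OF b] generate.one by metis
next
  case (incl h)
  then show ?case using orbit_lam[OF x b] generate.incl by metis
next
  case (inv h)
  have hc: "h \<in> carrier A" using inv orbit_sub[OF x] by auto
  show ?case using lam_inv[OF b hc] generate.inv orbit_lam[OF x b inv] by metis
next
  case (eng h1 h2)
  have "h1 \<in> carrier A" "h2 \<in> carrier A"
    using eng(1,2) A.generate_in_carrier orbit_sub[OF x] by auto
  then show ?case using lam_hom[OF b] eng generate.eng by metis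
qed

lemma main: assumes x: "x \<in> carrier A" and bg: "brace_gen A M x = carrier A"
  shows "generate A (perm_orbit (carrier A) (lambda_delta_gens A M) x) = carrier A"
proof -
  define X where "X = perm_orbit (carrier A) (lambda_delta_gens A M) x"
  define H where "H = generate A X"
  have XS: "X \<subseteq> carrier A" using orbit_sub[OF x] X_def by simp
  have HS: "H \<subseteq> carrier A" using A.generate_in_carrier[OF XS] H_def by blast
  have xH: "x \<in> H" using x_in_orbit[OF x] generate.incl H_def X_def by metis
  have sA: "subgroup H A" using A.generate_is_subgroup[OF XS] H_def by simp
  have lH: "\<And>b h. b \<in> carrier A \<Longrightarrow> h \<in> H \<Longrightarrow> brace_lambda A M b h \<in> H"
    using gen_lam[OF x] H_def X_def by simp
  have sM: "subgroup H M"
  proof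
    show "H \<subseteq> carrier M" using HS carr by simp
    show "\<one>\<^bsub>M\<^esub> \<in> H" using one_eq sA subgroup.one_closed by fastforce
  next
    fix a h assume a: "a \<in> H" and h: "h \<in> H"
    have ac: "a \<in> carrier A" and hc: "h \<in> carrier A" using a h HS by auto
    have "a \<otimes>\<^bsub>M\<^esub> h = a \<otimes>\<^bsub>A\<^esub> brace_lambda A M a h"
      using ac hc by (simp add: lam_app mc A.m_assoc[symmetric])
    thus "a \<otimes>\<^bsub>M\<^esub> h \<in> H" using lH[OF ac h] a sA subgroup.m_closed by fastforce
  next
    fix a assume a: "a \<in> H"
    have ac: "a \<in> carrier A" using a HS by auto
    define c where "c = inv\<^bsub>M\<^esub> a"
    have cc: "c \<in> carrier A" using mic ac c_def by simp
    have "c \<otimes>\<^bsub>M\<^esub> (a \<otimes>\<^bsub>A\<^esub> inv\<^bsub>A\<^esub> a) = (c \<otimes>\<^bsub>M\<^esub> a) \<otimes>\<^bsub>A\<^esub> inv\<^bsub>A\<^esub> c \<otimes>\<^bsub>A\<^esub> (c \<otimes>\<^bsub>M\<^esub> inv\<^bsub>A\<^esub> a)"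
      using brace[OF cc ac A.inv_closed[OF ac]] ac by simp
    moreover have "c \<otimes>\<^bsub>M\<^esub> a = \<one>\<^bsub>A\<^esub>" using c_def ac carr one_eq by simp
    ultimately have "c = brace_lambda A M c (inv\<^bsub>A\<^esub> a)"
      using ac cc by (simp add: lam_app r_one0)
    moreover have "inv\<^bsub>A\<^esub> a \<in> H" using a sA subgroup.m_inv_closed by fastforce
    ultimately show "inv\<^bsub>M\<^esub> a \<in> H" using lH[OF cc] c_def by metis
  qed
  have "H \<in> {S. x \<in> S \<and> subgroup S A \<and> subgroup S M}" using xH sA sM by simp
  hence "brace_gen A M x \<subseteq> H" unfolding brace_gen_def by (rule Inter_lower)
  hence "carrier A \<subseteq> H" using bg by simp
  thus ?thesis using HS H_def X_def by blast
qed
end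

theorem mainTheorem19:
  fixes A :: "('a, 'b) monoid_scheme" and M :: "('a, 'c) monoid_scheme" and x :: 'a
  assumes "skew_brace A M"
    and "finite (carrier A)"
    and "x \<in> carrier A"
    and "brace_gen A M x = carrier A"
  shows "transitive_cycle_base A M (perm_orbit (carrier A) (sigma_delta_gens A M) x)"
proof -
  have sk: "group A" "group M" "carrier M = carrier A" 
    and br: "\<forall>a\<in>carrier A. \<forall>b\<in>carrier A. \<forall>c\<in>carrier A.
        a \<otimes>\<^bsub>M\<^esub> (b \<otimes>\<^bsub>A\<^esub> c)
          = (a \<otimes>\<^bsub>M\<^esub> b) \<otimes>\<^bsub>A\<^esub> inv\<^bsub>A\<^esub> a \<otimes>\<^bsub>A\<^esub> (a \<otimes>\<^bsub>M\<^esub> c)"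
    using assms(1) unfolding skew_brace_def by blast+
  have "sbr A M"
    unfolding sbr_def sbr_axioms_def using sk br by blast
  then interpret sbr A M .
  have 1: "perm_orbit (carrier A) (lambda_delta_gens A M) x \<subseteq> carrier A"
    using orbit_sub[OF assms(3)] .
  have 2: "generate A (perm_orbit (carrier A) (lambda_delta_gens A M) x) = carrier A"
    using main[OF assms(3,4)] .
  show ?thesis unfolding transitive_cycle_base_def gens_eq
    using 1 2 assms(3) by blast
qed

end
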